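(* Let $\mathbf A \in \mathbb{H}^{M\times K}$, $\mathbf B \in \mathbb{H}^{K\times L}$ and $\mathbf C \in \mathbb{H}^{L\times N}$. Then $$\begin{aligned} \operatorname{vec}\big(\mathbf A \cdot_{\mathrm L} [\mathbf B \cdot_{\mathrm R} \mathbf C]\big) &= (\mathbf C^{\mathrm T} \otimes_{\mathrm R} \mathbf A)\cdot_{\mathrm L} \operatorname{vec}(\mathbf B),\\ \operatorname{vec}\big(\mathbf A \cdot_{\mathrm R} [\mathbf B \cdot_{\mathrm L} \mathbf C]\big) &= (\mathbf C^{\mathrm T} \otimes_{\mathrm L} \mathbf A)\cdot_{\mathrm R} \operatorname{vec}(\mathbf B),\\ \operatorname{vec}\big([\mathbf A \cdot_{\mathrm L} \mathbf B] \cdot_{\mathrm R} \mathbf C\big) &= (\mathbf C^{\mathrm T} \otimes_{\mathrm L} \mathbf A)\cdot_{\mathrm L} \operatorname{vec}(\mathbf B),\\ \operatorname{vec}\big([\mathbf A \cdot_{\mathrm R} \mathbf B] \cdot_{\mathrm L} \mathbf C\big) &= (\mathbf C^{\mathrm T} \otimes_{\mathrm R} \mathbf A)\cdot_{\mathrm R} \operatorname{vec}(\mathbf B). \end{aligned}$$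
   Context: $\mathbb{H}$ denotes the skew field of real quaternions and $^{\mathrm T}$ the (non-conjugating) transpose. For quaternion matrices, the left matrix product is $[\mathbf X \cdot_{\mathrm L} \mathbf Y]_{m,n} = \sum_{k} [\mathbf X]_{m,k}[\mathbf Y]_{k,n}$ and the right matrix product is $[\mathbf X \cdot_{\mathrm R} \mathbf Y]_{m,n} = \sum_{k} [\mathbf Y]_{k,n}[\mathbf X]_{m,k}$ (vectors are treated as one-column matrices). For $\mathbf X\in\mathbb{H}^{P\times Q}$, $\operatorname{vec}(\mathbf X)\in\mathbb{H}^{PQ\times 1}$ is the column-stacking vectorization, $[\operatorname{vec}(\mathbf X)]_{p+(q-1)P} = [\mathbf X]_{p,q}$. The left Kronecker product $\mathbf X \otimes_{\mathrm L} \mathbf Y$ is the block matrix whose $(i,j)$ block is $[\mathbf X]_{i,j}\,\mathbf Y$ (entries of $\mathbf Y$ multiplied on the left by $[\mathbf X]_{i,j}$); the right Kronecker product $\mathbf X \otimes_{\mathrm R} \mathbf Y$ is the block matrix whose $(i,j)$ block is $\mathbf Y\,[\mathbf X]_{i,j}$ (entries of $\mathbf Y$ multiplied on the right by $[\mathbf X]_{i,j}$). *)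

theory Defs
  imports Main "HOL.Real"
begin

datatype quat = Quat (qRe: real) (qI: real) (qJ: real) (qK: real)

lemma quat_eqI: "qRe x = qRe y \<Longrightarrow> qI x = qI y \<Longrightarrow> qJ x = qJ y \<Longrightarrow> qK x = qK y \<Longrightarrow> x = y"
  by (cases x; cases y) simp

instantiation quat :: ring_1
begin
definition "0 = Quat 0 0 0 0"
definition "1 = Quat 1 0 0 0"
definition "x + y = Quat (qRe x + qRe y) (qI x + qI y) (qJ x + qJ y) (qK x + qK y)"
definition "x - y = Quat (qRe x - qRe y) (qI x - qI y) (qJ x - qJ y) (qK x - qK y)"
definition "- x = Quat (- qRe x) (- qI x) (- qJ x) (- qK x)"
text \<open>Hamilton product: i*i = j*j = k*k = i*j*k = -1\<close>
definition "x * y = Quat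
   (qRe x * qRe y - qI x * qI y - qJ x * qJ y - qK x * qK y)
   (qRe x * qI y + qI x * qRe y + qJ x * qK y - qK x * qJ y)
   (qRe x * qJ y - qI x * qK y + qJ x * qRe y + qK x * qI y)
   (qRe x * qK y + qI x * qJ y - qJ x * qI y + qK x * qRe y)"
instance
  by standard (auto intro!: quat_eqI simp: zero_quat_def one_quat_def plus_quat_def
      minus_quat_def uminus_quat_def times_quat_def algebra_simps)
end

type_synonym qmat = "nat \<Rightarrow> nat \<Rightarrow> quat"

definition lmult :: "nat \<Rightarrow> qmat \<Rightarrow> qmat \<Rightarrow> qmat" where
  "lmult K X Y = (\<lambda>m n. \<Sum>k<K. X m k * Y k n)"

definition rmult :: "nat \<Rightarrow> qmat \<Rightarrow> qmat \<Rightarrow> qmat" where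
  "rmult K X Y = (\<lambda>m n. \<Sum>k<K. Y k n * X m k)"

definition qtrans :: "qmat \<Rightarrow> qmat" where
  "qtrans X = (\<lambda>i j. X j i)"

text \<open>Column-stacking vectorization of a matrix with P rows, as a one-column matrix:
  [vec X]_{p + q P} = X_{p,q} (0-based).\<close>
definition qvec :: "nat \<Rightarrow> qmat \<Rightarrow> qmat" where
  "qvec P X = (\<lambda>i j. X (i mod P) (i div P))"

text \<open>Left Kronecker product, Y of size R x S: block (i,j) is X_{i,j} Y.\<close>
definition kronL :: "nat \<Rightarrow> nat \<Rightarrow> qmat \<Rightarrow> qmat \<Rightarrow> qmat" where
  "kronL R S X Y = (\<lambda>a b. X (a div R) (b div S) * Y (a mod R) (b mod S))"

text \<open>Right Kronecker product, Y of size R x S: block (i,j) is Y X_{i,j}.\<close>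
definition kronR :: "nat \<Rightarrow> nat \<Rightarrow> qmat \<Rightarrow> qmat \<Rightarrow> qmat" where
  "kronR R S X Y = (\<lambda>a b. Y (a mod R) (b mod S) * X (a div R) (b div S))"

end

theory Submission
  imports Defs
begin

lemma sum_split_mod_div:
  fixes f :: "nat \<Rightarrow> nat \<Rightarrow> 'a::comm_monoid_add"
  shows "(\<Sum>j<L*K. f (j mod K) (j div K)) = (\<Sum>l<L. \<Sum>k<K. f k l)"
proof (induction L)
  case 0 then show ?case by simp
next
  case (Suc L)
  have "{..<Suc L * K} = {..<L*K} \<union> {L*K..<L*K+K}" by auto
  then have "(\<Sum>j<Suc L*K. f (j mod K) (j div K)) =
     (\<Sum>j<L*K. f (j mod K) (j div K)) + (\<Sum>j\<in>{L*K..<L*K+K}. f (j mod K) (j div K))"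
    by (simp add: sum.union_disjoint ivl_disj_int)
  also have "(\<Sum>j\<in>{L*K..<L*K+K}. f (j mod K) (j div K)) = (\<Sum>k<K. f k L)"
  proof -
    have "(\<Sum>j\<in>{L*K..<L*K+K}. f (j mod K) (j div K)) = (\<Sum>k<K. f ((k + L*K) mod K) ((k + L*K) div K))"
      using sum.atLeastLessThan_shift_bounds[of "\<lambda>j. f (j mod K) (j div K)" 0 "L*K" K]
      by (simp add: lessThan_atLeast0 add.commute comp_def)
    also have "\<dots> = (\<Sum>k<K. f k L)"
      by (rule sum.cong) auto
    finally show ?thesis .
  qed
  finally show ?case using Suc by simp
qed

theorem mainTheorem6:
  fixes M K L N :: nat and A B C :: qmat
  shows "\<forall>i < M * N.
      qvec M (lmult K A (rmult L B C)) i 0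
        = lmult (L * K) (kronR M K (qtrans C) A) (qvec K B) i 0
    \<and> qvec M (rmult K A (lmult L B C)) i 0
        = rmult (L * K) (kronL M K (qtrans C) A) (qvec K B) i 0
    \<and> qvec M (rmult L (lmult K A B) C) i 0
        = lmult (L * K) (kronL M K (qtrans C) A) (qvec K B) i 0
    \<and> qvec M (lmult L (rmult K A B) C) i 0
        = rmult (L * K) (kronR M K (qtrans C) A) (qvec K B) i 0"
  unfolding qvec_def lmult_def rmult_def kronL_def kronR_def qtrans_def
  apply (intro allI impI conjI)
     apply (subst sum_split_mod_div[where f="\<lambda>k l. A _ k * C l _ * B k l"])
     apply (simp add: sum_distrib_left mult.assoc)
     apply (rule sum.swap)
    apply (subst sum_split_mod_div[where f="\<lambda>k l. B k l * (C l _ * A _ k)"])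
    apply (simp add: sum_distrib_right mult.assoc)
    apply (rule sum.swap)
   apply (subst sum_split_mod_div[where f="\<lambda>k l. C l _ * A _ k * B k l"])
   apply (simp add: sum_distrib_left mult.assoc)
  apply (subst sum_split_mod_div[where f="\<lambda>k l. B k l * (A _ k * C l _)"])
  apply (simp add: sum_distrib_right mult.assoc)
  done

end
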